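(* For all $n\in\mathbb{N}$ and $a,b,c\in\mathbb{C}$ with $b\notin\mathbb{Z}^-$: \begin{align*} \sum_{j=0}^{n}\sum_{i=0}^{j}\frac{\binom{2n+a+2}{i}}{\binom{2n+1}{j}}&=\sum_{k=0}^{n}\frac{n+1}{2k+1}\,\frac{\binom{2k+a}{k}}{\binom{2k}{k}},\\ \sum_{j=0}^{n}\sum_{i=0}^{j}\frac{\binom{2n+3}{i}}{\binom{2n+b+1}{j}}&=\sum_{k=0}^{n}\frac{2n+b+2}{k+b+1}\,\frac{\binom{2k+1}{k}+\frac{4^k b}{k+1}}{\binom{2k+b+2}{k+1}},\\ \sum_{j=0}^{n}\sum_{i=0}^{j}\frac{\binom{n+1}{i}}{\binom{n+b}{j}}\,c^{j-i}&=\sum_{k=0}^{n}\frac{n+b+1}{b+1}\,\frac{(c+1)^k}{\binom{k+b+1}{k}},\\ \sum_{j=0}^{n}\sum_{i=0}^{j}\frac{\binom{n+2}{i}}{\binom{n}{j}}\,c^{j-i+1}&=\sum_{k=0}^{n}\frac{n+1}{k+1}\left((c+1)^{k+1}-1\right). \end{align*}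
   Context: For $x\in\mathbb{C}$, $i\in\mathbb{N}$: $\binom{x}{i}=x(x-1)\cdots(x-i+1)/i!$. $\mathbb{Z}^-=\{-1,-2,\dots\}$. Here $c^0=1$ for every $c$. *)

theory Defs
  imports Complex_Main
begin

definition neg_ints :: "complex set" where
  "neg_ints = {of_int k | k. k \<le> -1}"

end

theory Submission
  imports Defs
begin

definition A :: "complex \<Rightarrow> complex \<Rightarrow> nat \<Rightarrow> complex" where
  "A c x j = (\<Sum>i=0..j. (x gchoose i) * c^(j-i))"

lemma A0 [simp]: "A c x 0 = 1" by (simp add: A_def)

lemma A_Suc: "A c x (Suc j) = c * A c x j + (x gchoose Suc j)"
proof -
  have "A c x (Suc j) = (\<Sum>i=0..j. (x gchoose i) * c^(Suc j-i)) + (x gchoose Suc j)"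
    by (simp add: A_def)
  also have "(\<Sum>i=0..j. (x gchoose i) * c^(Suc j-i)) = c * A c x j"
    by (simp add: A_def sum_distrib_left Suc_diff_le algebra_simps)
  finally show ?thesis .
qed

lemma A_pascal: "A c (x+1) (Suc j) = A c x (Suc j) + A c x j"
proof (induction j)
  case 0 then show ?case by (simp add: A_Suc)
next
  case (Suc j)
  have "A c (x+1) (Suc (Suc j)) = c * A c (x+1) (Suc j) + ((x+1) gchoose Suc (Suc j))"
    by (rule A_Suc)
  also have "\<dots> = c * (A c x (Suc j) + A c x j) + (x gchoose Suc j) + (x gchoose Suc (Suc j))"
    using Suc by (simp add: gbinomial_Suc_Suc)
  also have "\<dots> = A c x (Suc (Suc j)) + A c x (Suc j)"
    by (simp add: A_Suc algebra_simps)
  finally show ?case .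
qed

lemma A_nat: "A c (of_nat m) m = (c+1)^m"
proof -
  have "(c+1)^m = (1+c)^m" by (simp add: add.commute)
  also have "\<dots> = (\<Sum>k\<le>m. of_nat (m choose k) * 1^k * c^(m-k))" by (rule binomial_ring)
  finally show ?thesis by (simp add: A_def binomial_gbinomial atLeast0AtMost)
qed

lemma core:
  fixes W V :: "nat \<Rightarrow> complex"
  assumes "\<And>j. j \<le> n \<Longrightarrow> r / V j = 1 / W j + 1 / W (Suc j)"
  shows "(\<Sum>j=0..n. A c (x+1) j / W j) = r * (\<Sum>j=0..n. A c x j / V j) - A c x n / W (Suc n)"
  using assms
proof (induction n)
  case 0
  have "r / V 0 = 1 / W 0 + 1 / W (Suc 0)" using 0 by simp
  then show ?case by (simp add: field_simps)
next
  case (Suc n)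
  have IH: "(\<Sum>j=0..n. A c (x+1) j / W j) = r * (\<Sum>j=0..n. A c x j / V j) - A c x n / W (Suc n)"
    using Suc by simp
  have R: "r / V (Suc n) = 1 / W (Suc n) + 1 / W (Suc (Suc n))" using Suc by simp
  have "(\<Sum>j=0..Suc n. A c (x+1) j / W j) = (\<Sum>j=0..n. A c (x+1) j / W j) + A c (x+1) (Suc n) / W (Suc n)"
    by simp
  also have "\<dots> = r * (\<Sum>j=0..n. A c x j / V j) - A c x n / W (Suc n) + (A c x (Suc n) + A c x n) / W (Suc n)"
    using IH A_pascal by simp
  also have "\<dots> = r * (\<Sum>j=0..n. A c x j / V j) + A c x (Suc n) * (1 / W (Suc n))"
    by (simp add: field_simps add_divide_distrib)
  also have "\<dots> = r * (\<Sum>j=0..n. A c x j / V j) + A c x (Suc n) * (r / V (Suc n)) - A c x (Suc n) / W (Suc (Suc n))"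
    by (simp add: R algebra_simps)
  also have "\<dots> = r * (\<Sum>j=0..Suc n. A c x j / V j) - A c x (Suc n) / W (Suc (Suc n))"
    by (simp add: algebra_simps)
  finally show ?case .
qed

lemma core2:
  fixes W V :: "nat \<Rightarrow> complex"
  assumes "\<And>j. j \<le> n \<Longrightarrow> r / V j = 1 / W j + 1 / W (Suc j)"
  shows "(\<Sum>j=0..Suc n. A c (x+1) j / W j) = r * (\<Sum>j=0..n. A c x j / V j) + A c x (Suc n) / W (Suc n)"
proof -
  have "(\<Sum>j=0..Suc n. A c (x+1) j / W j) = (\<Sum>j=0..n. A c (x+1) j / W j) + (A c x (Suc n) + A c x n) / W (Suc n)"
    using A_pascal by simp
  also have "\<dots> = r * (\<Sum>j=0..n. A c x j / V j) + A c x (Suc n) / W (Suc n)"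
    using core[where n=n and r=r and V=V and W=W, OF assms] by (simp add: add_divide_distrib)
  finally show ?thesis .
qed

lemma gnz: fixes a :: complex assumes "\<And>i. i < k \<Longrightarrow> a \<noteq> of_nat i" shows "(a gchoose k) \<noteq> 0"
proof
  assume "(a gchoose k) = 0"
  then have "(\<Prod>i = 0..<k. a - of_nat i) = 0" by (simp add: gbinomial_mult_fact'[symmetric])
  then obtain i where "i < k" "a - of_nat i = 0" by auto
  with assms show False by auto
qed

lemma rel:
  fixes y :: complex
  assumes "(y+1) gchoose j \<noteq> 0" "(y+1) gchoose Suc j \<noteq> 0" "y + 1 \<noteq> 0"
  shows "(y+2)/(y+1) / (y gchoose j) = 1/((y+1) gchoose j) + 1/((y+1) gchoose Suc j)"
proof -
  define G where "G = (y+1) gchoose j"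
  define H where "H = (y+1) gchoose Suc j"
  define g where "g = y gchoose j"
  have e1: "of_nat (Suc j) * H = (y+1) * g"
    using gbinomial_absorption[of j "y+1"] by (simp add: H_def g_def)
  have e2: "(y + 1 - of_nat j) * G = of_nat (Suc j) * H"
    using gbinomial_absorb_comp[of "y+1" j] e1 by (simp add: G_def g_def)
  have "(y+2)/(y+1) / g = (y+2) / (of_nat (Suc j) * H)"
    using e1 assms(3) by (simp add: field_simps)
  also have "\<dots> = 1/G + 1/H"
  proof -
    have GH: "G \<noteq> 0" "H \<noteq> 0" using assms by (auto simp: G_def H_def)
    have nz: "of_nat (Suc j) * H \<noteq> (0::complex)" using GH by (simp del: of_nat_Suc)
    have "(y+2) * G = of_nat (Suc j) * H + of_nat (Suc j) * G"
      using e2 by (simp add: algebra_simps)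
    then have "H * ((y+2) * G) = H * (of_nat (Suc j) * H + of_nat (Suc j) * G)" by simp
    then show ?thesis using GH nz by (simp add: field_simps del: of_nat_Suc)
  qed
  finally show ?thesis by (simp add: G_def H_def g_def)
qed

lemma canc: "(p::complex) \<noteq> 0 \<Longrightarrow> q / p * (p / r * t) = q / r * t"
  by (cases "r = 0") (simp_all add: field_simps)

lemma nb: assumes "b \<notin> neg_ints" "b + of_nat m = of_nat k" shows "m \<le> k"
proof (rule ccontr)
  assume "\<not> m \<le> k"
  then have "int k - int m \<le> -1" by simp
  moreover have "b = of_int (int k - int m)" using assms(2) by (simp add: algebra_simps)
  ultimately have "b \<in> neg_ints" unfolding neg_ints_def by blast
  with assms(1) show False by simp
qed

lemma nb': assumes "b \<notin> neg_ints" "i < m" shows "b + of_nat m \<noteq> of_nat i"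
  using nb[OF assms(1), of m i] assms(2) by auto

lemma id3:
  fixes b c :: complex
  assumes B: "b \<notin> neg_ints"
  shows "(\<Sum>j=0..n. A c (of_nat (n+1)) j / ((of_nat n + b) gchoose j))
     = (\<Sum>k=0..n. (of_nat n + b + 1) / (b + 1) * ((c + 1)^k / ((of_nat k + b + 1) gchoose k)))"
proof (induction n)
  case 0
  have "b + 1 \<noteq> 0" using nb'[OF B, of 0 1] by (auto simp: add_eq_0_iff)
  then show ?case by simp
next
  case (Suc n)
  define y where "y = of_nat n + b"
  have b1: "b + 1 \<noteq> 0" using nb'[OF B, of 0 1] by (auto simp: add_eq_0_iff)
  have y1: "y + 1 \<noteq> 0" using nb'[OF B, of 0 "n+1"] by (simp add: y_def algebra_simps)
  have y2: "y + 2 \<noteq> 0" using nb'[OF B, of 0 "n+2"] by (simp add: y_def algebra_simps)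
  have ynz: "(y+1) gchoose k \<noteq> 0" if "k \<le> Suc n" for k
    using that nb'[OF B, of _ "n+1"] by (intro gnz) (auto simp: y_def algebra_simps)
  have R: "(y+2)/(y+1) / (y gchoose j) = 1/((y+1) gchoose j) + 1/((y+1) gchoose Suc j)" if "j \<le> n" for j
    using that by (intro rel ynz y1) auto
  have C: "(\<Sum>j=0..Suc n. A c (of_nat (n+1) + 1) j / ((y+1) gchoose j))
     = (y+2)/(y+1) * (\<Sum>j=0..n. A c (of_nat (n+1)) j / (y gchoose j)) + A c (of_nat (n+1)) (Suc n) / ((y+1) gchoose Suc n)"
    by (rule core2) (rule R)
  have T: "(y + 2) / (b+1) * ((c+1)^(Suc n) / ((y + 2) gchoose Suc n)) = (c+1)^(Suc n) / ((y+1) gchoose Suc n)"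
  proof -
    have "(y + 2 - of_nat (Suc n)) * ((y+2) gchoose Suc n) = (y+2) * ((y+2-1) gchoose Suc n)"
      by (rule gbinomial_absorb_comp)
    then have "(b+1) * ((y+2) gchoose Suc n) = (y+2) * ((y+1) gchoose Suc n)"
      by (simp add: y_def algebra_simps)
    then have "(y+2) gchoose Suc n = (y+2) * ((y+1) gchoose Suc n) / (b+1)"
      using b1 by (simp add: field_simps)
    then show ?thesis using b1 y2 ynz[of "Suc n"] by simp
  qed
  have "(\<Sum>j=0..Suc n. A c (of_nat (Suc n+1)) j / ((of_nat (Suc n) + b) gchoose j))
      = (\<Sum>j=0..Suc n. A c (of_nat (n+1) + 1) j / ((y+1) gchoose j))"
    by (simp add: y_def algebra_simps)
  also have "\<dots> = (y+2)/(y+1) * (\<Sum>k=0..n. (y + 1) / (b + 1) * ((c + 1)^k / ((of_nat k + b + 1) gchoose k)))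
      + (c+1)^(Suc n) / ((y+1) gchoose Suc n)"
    unfolding C using Suc by (simp add: y_def A_nat del: of_nat_Suc)
  also have "\<dots> = (\<Sum>k=0..n. (y + 2) / (b + 1) * ((c + 1)^k / ((of_nat k + b + 1) gchoose k)))
      + (y + 2) / (b+1) * ((c+1)^(Suc n) / ((y + 2) gchoose Suc n))"
    unfolding T using y1 by (simp add: sum_distrib_left)
  also have "\<dots> = (\<Sum>k=0..Suc n. (y + 2) / (b + 1) * ((c + 1)^k / ((of_nat k + b + 1) gchoose k)))"
    by (simp add: sum.atLeast0_atMost_Suc y_def add_ac)
  also have "y + 2 = of_nat (Suc n) + b + 1" by (simp add: y_def)
  finally show ?case .
qed

lemma id4:
  fixes c :: complex
  shows "(\<Sum>j=0..n. c * A c (of_nat (n+2)) j / (of_nat n gchoose j))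
     = (\<Sum>k=0..n. of_nat (n+1) / of_nat (k+1) * ((c + 1)^(k+1) - 1))"
proof (induction n)
  case 0
  then show ?case by simp
next
  case (Suc n)
  define y :: complex where "y = of_nat n"
  have yS: "y + 1 = of_nat (Suc n)" by (simp add: y_def)
  then have y1: "y + 1 \<noteq> 0" by (simp only: of_nat_eq_0_iff)
  have ynz: "(y+1) gchoose k \<noteq> 0" if "k \<le> Suc n" for k
    using that unfolding yS by (intro gnz) (auto simp del: of_nat_Suc)
  have R: "(y+2)/(y+1) / (y gchoose j) = 1/((y+1) gchoose j) + 1/((y+1) gchoose Suc j)" if "j \<le> n" for j
    using that by (intro rel ynz y1) auto
  have C: "(\<Sum>j=0..Suc n. A c (of_nat (n+2) + 1) j / ((y+1) gchoose j))
     = (y+2)/(y+1) * (\<Sum>j=0..n. A c (of_nat (n+2)) j / (y gchoose j)) + A c (of_nat (n+2)) (Suc n) / ((y+1) gchoose Suc n)"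
    by (rule core2) (rule R)
  have last: "c * A c (of_nat (n+2)) (Suc n) = (c+1)^(Suc n + 1) - 1"
  proof -
    have o: "(of_nat (n+2)::complex) gchoose Suc (Suc n) = 1"
      using binomial_gbinomial[of "n+2" "n+2", where 'a=complex] by simp
    show ?thesis using A_Suc[of c "of_nat (n+2)" "Suc n"] A_nat[of c "n+2"] o
      by (simp add: algebra_simps)
  qed
  have one: "(y+1) gchoose Suc n = 1" unfolding yS
    using binomial_gbinomial[of "Suc n" "Suc n", where 'a=complex] by simp
  have IH: "(\<Sum>j=0..n. A c (of_nat (n+2)) j / (y gchoose j)) * c
     = (\<Sum>k=0..n. of_nat (n+1) / of_nat (k+1) * ((c + 1)^(k+1) - 1))"
    using Suc by (simp add: y_def sum_distrib_left sum_distrib_right mult.commute)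
  have "(\<Sum>j=0..Suc n. c * A c (of_nat (Suc n+2)) j / (of_nat (Suc n) gchoose j))
      = c * (\<Sum>j=0..Suc n. A c (of_nat (n+2) + 1) j / ((y+1) gchoose j))"
    by (simp add: y_def sum_distrib_left algebra_simps)
  also have "\<dots> = (y+2)/(y+1) * ((\<Sum>j=0..n. A c (of_nat (n+2)) j / (y gchoose j)) * c)
      + c * A c (of_nat (n+2)) (Suc n)"
    unfolding C one by (simp add: algebra_simps)
  also have "\<dots> = (y+2)/(y+1) * (\<Sum>k=0..n. of_nat (n+1) / of_nat (k+1) * ((c + 1)^(k+1) - 1))
      + ((c+1)^(Suc n + 1) - 1)"
    unfolding IH last ..
  also have "\<dots> = (\<Sum>k=0..n. of_nat (Suc n+1) / of_nat (k+1) * ((c + 1)^(k+1) - 1))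
      + ((c+1)^(Suc n + 1) - 1)"
  proof -
    have e: "of_nat (n+1) = y+1" "of_nat (Suc n+1) = y+2" by (simp_all add: y_def)
    have t: "(y+2)/(y+1) * (of_nat (n+1) / of_nat (k+1) * t) = of_nat (Suc n+1) / of_nat (k+1) * t" for k t
      unfolding e by (rule canc[OF y1])
    show ?thesis unfolding sum_distrib_left t ..
  qed
  also have "\<dots> = (\<Sum>k=0..Suc n. of_nat (Suc n+1) / of_nat (k+1) * ((c + 1)^(k+1) - 1))"
  proof -
    have nz2: "(2 + of_nat n::complex) \<noteq> 0"
      by (metis add_is_0 of_nat_eq_0_iff of_nat_numeral of_nat_add zero_neq_numeral)
    then show ?thesis by simp
  qed
  finally show ?case .
qed

lemma alg: fixes r2 G H P Q S r1 :: complex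
  assumes "r2 / G = 2 / H"
  shows "r2 * (r1*S + (P+Q)/G) - ((P+Q)+P)/H = r2*r1*S + Q/H"
proof -
  have "r2 * ((P+Q)/G) = (P+Q)*(r2/G)" by simp
  also have "\<dots> = 2*(P+Q)/H" using assms by simp
  finally have e: "r2 * ((P+Q)/G) = 2*(P+Q)/H" .
  have "r2 * (r1*S + (P+Q)/G) - ((P+Q)+P)/H = r2*r1*S + (2*(P+Q)/H - ((P+Q)+P)/H)"
    using e by (simp add: algebra_simps)
  also have "2*(P+Q)/H - ((P+Q)+P)/H = Q/H" by (simp add: diff_divide_distrib[symmetric] algebra_simps)
  finally show ?thesis .
qed

lemma id1:
  fixes a :: complex
  shows "(\<Sum>j=0..n. A 1 (of_nat (2*n) + a + 2) j / (of_nat (2*n+1) gchoose j))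
     = (\<Sum>k=0..n. of_nat (n+1) / of_nat (2*k+1) * (((of_nat (2*k) + a) gchoose k) / (of_nat (2*k) gchoose k)))"
proof (induction n)
  case 0
  then show ?case by simp
next
  case (Suc n)
  define y :: complex where "y = of_nat (2*n+1)"
  define x :: complex where "x = of_nat (2*n) + a + 2"
  have yA: "y + 1 = of_nat (2*n+2)" by (simp add: y_def)
  have yB: "y + 1 + 1 = of_nat (2*n+3)" by (simp add: y_def)
  have y1: "y + 1 \<noteq> 0" unfolding yA by (simp only: of_nat_eq_0_iff)
  have y2: "y + 1 + 1 \<noteq> 0" unfolding yB by (simp only: of_nat_eq_0_iff)
  have ynz1: "(y+1) gchoose k \<noteq> 0" if "k \<le> Suc n" for k
    using that unfolding yA by (intro gnz) (auto simp del: of_nat_Suc of_nat_add)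
  have ynz2: "(y+1+1) gchoose k \<noteq> 0" if "k \<le> Suc (Suc n)" for k
    using that unfolding yB by (intro gnz) (auto simp del: of_nat_Suc of_nat_add)
  have R1: "(y+2)/(y+1) / (y gchoose j) = 1/((y+1) gchoose j) + 1/((y+1) gchoose Suc j)" if "j \<le> n" for j
    using that by (intro rel ynz1 y1) auto
  have R2: "(y+1+2)/(y+1+1) / ((y+1) gchoose j) = 1/((y+1+1) gchoose j) + 1/((y+1+1) gchoose Suc j)" if "j \<le> Suc n" for j
    using that by (intro rel ynz2 y2) auto
  have C1: "(\<Sum>j=0..Suc n. A 1 (x + 1) j / ((y+1) gchoose j))
     = (y+2)/(y+1) * (\<Sum>j=0..n. A 1 x j / (y gchoose j)) + A 1 x (Suc n) / ((y+1) gchoose Suc n)"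
    by (rule core2) (rule R1)
  have C2: "(\<Sum>j=0..Suc n. A 1 (x + 1 + 1) j / ((y+1+1) gchoose j))
     = (y+1+2)/(y+1+1) * (\<Sum>j=0..Suc n. A 1 (x+1) j / ((y+1) gchoose j)) - A 1 (x+1) (Suc n) / ((y+1+1) gchoose Suc (Suc n))"
    by (rule core) (rule R2)
  have sym: "(y+1+1) gchoose Suc n = (y+1+1) gchoose Suc (Suc n)"
    unfolding yB by (subst gbinomial_of_nat_symmetric) auto
  have R2': "(y+1+2)/(y+1+1) / ((y+1) gchoose Suc n) = 2 / ((y+1+1) gchoose Suc (Suc n))"
    using R2[of "Suc n"] sym by simp
  have Ap: "A 1 (x+1) (Suc n) = (A 1 x n + (x gchoose Suc n)) + A 1 x n"
    using A_pascal[of 1 x n] A_Suc[of 1 x n] by simp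
  have As: "A 1 x (Suc n) = A 1 x n + (x gchoose Suc n)"
    using A_Suc[of 1 x n] by simp
  have IH: "(\<Sum>j=0..n. A 1 x j / (y gchoose j))
     = (\<Sum>k=0..n. of_nat (n+1) / of_nat (2*k+1) * (((of_nat (2*k) + a) gchoose k) / (of_nat (2*k) gchoose k)))"
    using Suc by (simp add: x_def y_def)
  have fac: "(y+1+1) gchoose Suc (Suc n) = (y+1+1) / of_nat (Suc (Suc n)) * ((y+1) gchoose Suc n)"
    by (rule gbinomial_factors)
  have rr: "(y+1+2)/(y+1+1) * ((y+2)/(y+1)) = of_nat (Suc n + 1) / of_nat (n+1)"
  proof -
    have n1: "(1 + of_nat n :: complex) \<noteq> 0" by (metis of_nat_Suc of_nat_eq_0_iff nat.distinct(1))
    have "(y+1+2)/(y+1+1) * ((y+2)/(y+1)) = (y+1+2)/(y+1+1) * ((y+1+1)/(y+1))"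
      by (simp add: add.assoc)
    also have "\<dots> = (y+1+2)/(y+1)" using y2 by simp
    also have "\<dots> = (2 * of_nat (Suc n + 1)) / (2 * of_nat (n+1))"
      by (simp add: y_def algebra_simps)
    also have "\<dots> = of_nat (Suc n + 1) / of_nat (n+1)"
      by (rule mult_divide_mult_cancel_left) simp
    finally show ?thesis .
  qed
  have "(\<Sum>j=0..Suc n. A 1 (of_nat (2*Suc n) + a + 2) j / (of_nat (2*Suc n+1) gchoose j))
     = (\<Sum>j=0..Suc n. A 1 (x + 1 + 1) j / ((y+1+1) gchoose j))"
    by (simp add: x_def y_def algebra_simps)
  also have "\<dots> = (y+1+2)/(y+1+1) * ((y+2)/(y+1) * (\<Sum>j=0..n. A 1 x j / (y gchoose j))
      + (A 1 x n + (x gchoose Suc n)) / ((y+1) gchoose Suc n))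
      - ((A 1 x n + (x gchoose Suc n)) + A 1 x n) / ((y+1+1) gchoose Suc (Suc n))"
    unfolding C2 C1 Ap As ..
  also have "\<dots> = (y+1+2)/(y+1+1) * ((y+2)/(y+1)) * (\<Sum>j=0..n. A 1 x j / (y gchoose j))
      + (x gchoose Suc n) / ((y+1+1) gchoose Suc (Suc n))"
    by (rule alg[OF R2'])
  also have "\<dots> = (\<Sum>k=0..Suc n. of_nat (Suc n+1) / of_nat (2*k+1) * (((of_nat (2*k) + a) gchoose k) / (of_nat (2*k) gchoose k)))"
  proof -
    have p: "(of_nat (n+1)::complex) \<noteq> 0" by (simp only: of_nat_eq_0_iff)
    have t: "of_nat (Suc n + 1) / of_nat (n+1) * (of_nat (n+1) / of_nat (2*k+1) * (t::complex)) = of_nat (Suc n+1) / of_nat (2*k+1) * t" for k t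
      by (rule canc[OF p])
    have G: "(y+1) gchoose Suc n \<noteq> 0" by (rule ynz1) simp
    have last: "(x gchoose Suc n) / ((y+1+1) gchoose Suc (Suc n))
       = of_nat (Suc n+1) / of_nat (2*Suc n+1) * (((of_nat (2*Suc n) + a) gchoose Suc n) / (of_nat (2*Suc n) gchoose Suc n))"
    proof -
      have e: "x = of_nat (2*Suc n) + a" "y + 1 = of_nat (2*Suc n)" "y+1+1 = of_nat (2*Suc n+1)"
        "of_nat (Suc (Suc n)) = (of_nat (Suc n+1)::complex)"
        by (simp_all add: x_def y_def)
      show ?thesis unfolding fac using G y2 unfolding e by (simp add: field_simps)
    qed
    show ?thesis unfolding rr IH sum_distrib_left t last by simp
  qed
  finally show ?case .
qed

lemma alg2: fixes Y G Hh K M1 Mb F D b :: complex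
  assumes "Hh = (Y+1)*G/M1" "K = (Y+2)*Hh/Mb" "Y+1 \<noteq> 0" "Y+2 \<noteq> 0" "G \<noteq> 0" "M1 \<noteq> 0" "Mb \<noteq> 0"
    "b = Y + 2 - 2*M1"
  shows "(Y+2)/(Y+1) * (F/G) - (2*F - D)/Hh = (Y+2)/Mb * ((D + F*b/M1)/K)"
proof -
  define Z where "Z = (Y+1)*G"
  have Z: "Z \<noteq> 0" using assms by (simp add: Z_def)
  have H: "Hh = Z/M1" using assms(1) by (simp add: Z_def)
  have K: "K = (Y+2)*Z/(M1*Mb)" using assms(2) H by simp
  have l1: "(Y+2)/(Y+1) * (F/G) = (Y+2)*F/Z" by (simp add: Z_def)
  have l2: "(2*F - D)/Hh = (2*F - D)*M1/Z" using assms Z by (simp add: H)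
  have r: "(Y+2)/Mb * ((D + F*b/M1)/K) = (D*M1 + F*b)/Z"
  proof -
    have "(Y+2)/Mb * ((D + F*b/M1)/((Y+2)*Z/(M1*Mb))) = (Y+2)/Mb * ((D + F*b/M1) * (M1*Mb) / ((Y+2)*Z))"
      by simp
    also have "(D + F*b/M1) * (M1*Mb) = (D*M1 + F*b)*Mb" using assms(6) by (simp add: field_simps)
    also have "(Y+2)/Mb * ((D*M1 + F*b)*Mb / ((Y+2)*Z)) = (D*M1 + F*b)/Z"
      using assms(4,7) Z by simp
    finally show ?thesis unfolding K .
  qed
  have "(Y+2)*F/Z - (2*F - D)*M1/Z = ((Y+2)*F - (2*F - D)*M1)/Z" by (simp add: diff_divide_distrib)
  also have "(Y+2)*F - (2*F - D)*M1 = D*M1 + F*b" unfolding assms(8) by (simp add: algebra_simps)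
  finally have X: "(Y+2)*F/Z - (2*F - D)*M1/Z = (D*M1 + F*b)/Z" .
  show ?thesis unfolding l1 l2 r by (rule X)
qed

lemma A1_sum: "A 1 x j = (\<Sum>k\<le>j. x gchoose k)"
  by (simp add: A_def atLeast0AtMost)

lemma id2:
  fixes b :: complex
  assumes B: "b \<notin> neg_ints"
  shows "(\<Sum>j=0..n. A 1 (of_nat (2*n+3)) j / ((of_nat (2*n) + b + 1) gchoose j))
     = (\<Sum>k=0..n. (of_nat (2*n) + b + 2) / (of_nat k + b + 1)
                 * (((of_nat (2*k+1) gchoose k) + 4^k * b / of_nat (k+1)) / ((of_nat (2*k) + b + 2) gchoose (k+1))))"
proof (induction n)
  case 0
  have b1: "b + 1 \<noteq> 0" using nb'[OF B, of 0 1] by simp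
  have b2: "b + 2 \<noteq> 0" using nb'[OF B, of 0 2] by simp
  show ?case using b1 b2 by simp
next
  case (Suc n)
  define y :: complex where "y = of_nat (2*n) + b + 1"
  define x :: complex where "x = of_nat (2*n+3)"
  have yA: "y + 1 = b + of_nat (2*n+2)" by (simp add: y_def algebra_simps)
  have yB: "y + 1 + 1 = b + of_nat (2*n+3)" by (simp add: y_def algebra_simps)
  have y1: "y + 1 \<noteq> 0" unfolding yA using nb'[OF B, of 0 "2*n+2"] by simp
  have y2: "y + 1 + 1 \<noteq> 0" unfolding yB using nb'[OF B, of 0 "2*n+3"] by simp
  have ynz1: "(y+1) gchoose k \<noteq> 0" if "k \<le> Suc n" for k
    using that unfolding yA by (intro gnz nb'[OF B]) auto
  have ynz2: "(y+1+1) gchoose k \<noteq> 0" if "k \<le> Suc (Suc n)" for k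
    using that unfolding yB by (intro gnz nb'[OF B]) auto
  have R1: "(y+2)/(y+1) / (y gchoose j) = 1/((y+1) gchoose j) + 1/((y+1) gchoose Suc j)" if "j \<le> n" for j
    using that by (intro rel ynz1 y1) auto
  have R2: "(y+1+2)/(y+1+1) / ((y+1) gchoose j) = 1/((y+1+1) gchoose j) + 1/((y+1+1) gchoose Suc j)" if "j \<le> Suc n" for j
    using that by (intro rel ynz2 y2) auto
  have C1: "(\<Sum>j=0..Suc n. A 1 (x + 1) j / ((y+1) gchoose j))
     = (y+2)/(y+1) * (\<Sum>j=0..n. A 1 x j / (y gchoose j)) + A 1 x (Suc n) / ((y+1) gchoose Suc n)"
    by (rule core2) (rule R1)
  have C2: "(\<Sum>j=0..Suc n. A 1 (x + 1 + 1) j / ((y+1+1) gchoose j))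
     = (y+1+2)/(y+1+1) * (\<Sum>j=0..Suc n. A 1 (x+1) j / ((y+1) gchoose j)) - A 1 (x+1) (Suc n) / ((y+1+1) gchoose Suc (Suc n))"
    by (rule core) (rule R2)
  define F :: complex where "F = 4^(Suc n)"
  define D where "D = x gchoose Suc n"
  have AF: "A 1 x (Suc n) = F"
  proof -
    have "A 1 x (Suc n) = (\<Sum>k\<le>Suc n. (2 * of_nat (Suc n) + 1) gchoose k)"
      unfolding A1_sum by (simp add: x_def algebra_simps)
    also have "\<dots> = 2^(2*Suc n)" by (rule gbinomial_r_part_sum)
    also have "\<dots> = F" by (simp add: F_def power_mult)
    finally show ?thesis .
  qed
  have Ap: "A 1 (x+1) (Suc n) = 2*F - D"
    using A_pascal[of 1 x n] A_Suc[of 1 x n] AF by (simp add: D_def)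
  have IH: "(\<Sum>j=0..n. A 1 x j / (y gchoose j))
     = (\<Sum>k=0..n. (y + 1) / (of_nat k + b + 1)
                 * (((of_nat (2*k+1) gchoose k) + 4^k * b / of_nat (k+1)) / ((of_nat (2*k) + b + 2) gchoose (k+1))))"
    using Suc by (simp add: x_def y_def add.assoc)
  have "(\<Sum>j=0..Suc n. A 1 (of_nat (2*Suc n+3)) j / ((of_nat (2*Suc n) + b + 1) gchoose j))
     = (\<Sum>j=0..Suc n. A 1 (x + 1 + 1) j / ((y+1+1) gchoose j))"
    by (simp add: x_def y_def algebra_simps)
  also have "\<dots> = (y+1+2)/(y+1+1) * ((y+2)/(y+1) * (\<Sum>j=0..n. A 1 x j / (y gchoose j)))
      + ((y+1+2)/(y+1+1) * (F / ((y+1) gchoose Suc n)) - (2*F - D) / ((y+1+1) gchoose Suc (Suc n)))"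
    unfolding C2 C1 Ap AF by (simp add: algebra_simps)
  also have "(y+1+2)/(y+1+1) * (F / ((y+1) gchoose Suc n)) - (2*F - D) / ((y+1+1) gchoose Suc (Suc n))
     = (of_nat (2*Suc n) + b + 2) / (of_nat (Suc n) + b + 1)
        * (((of_nat (2*Suc n+1) gchoose Suc n) + 4^(Suc n) * b / of_nat (Suc n+1)) / ((of_nat (2*Suc n) + b + 2) gchoose (Suc n+1)))"
  proof -
    define Y where "Y = y + 1"
    define G where "G = (y+1) gchoose Suc n"
    define Hh where "Hh = (y+1+1) gchoose Suc (Suc n)"
    define K where "K = (y+1+2) gchoose Suc (Suc n)"
    define M1 :: complex where "M1 = of_nat (Suc n + 1)"
    define Mb where "Mb = of_nat (Suc n) + b + 1"
    have hH: "Hh = (Y+1)*G/M1" unfolding Hh_def Y_def G_def M1_def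
      using gbinomial_factors[of "y+1" "Suc n"] by simp
    have Mb0: "Mb \<noteq> 0" unfolding Mb_def using nb'[OF B, of 0 "n+2"] by (simp add: algebra_simps)
    have M10: "M1 \<noteq> 0" unfolding M1_def by (simp only: of_nat_eq_0_iff)
    have hK: "K = (Y+2)*Hh/Mb"
    proof -
      have "(y+1+2 - of_nat (Suc (Suc n))) * ((y+1+2) gchoose Suc (Suc n)) = (y+1+2) * ((y+1+2-1) gchoose Suc (Suc n))"
        by (rule gbinomial_absorb_comp)
      moreover have "y+1+2 - of_nat (Suc (Suc n)) = Mb" by (simp add: Mb_def y_def)
      moreover have "y+1+2-1 = y+1+1" by simp
      ultimately have "Mb * K = (Y+2) * Hh" by (simp add: K_def Hh_def Y_def add_ac)
      then show ?thesis using Mb0 by (simp add: field_simps)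
    qed
    have G0: "G \<noteq> 0" unfolding G_def by (rule ynz1) simp
    have "y + 3 = b + of_nat (2*n+4)" by (simp add: y_def algebra_simps)
    then have y3: "y + 3 \<noteq> 0" using nb'[OF B, of 0 "2*n+4"] by (simp only:) simp
    have bb: "b = Y + 2 - 2*M1" by (simp add: Y_def y_def M1_def algebra_simps)
    have main: "(Y+2)/(Y+1) * (F/G) - (2*F - D)/Hh = (Y+2)/Mb * ((D + F*b/M1)/K)"
      by (rule alg2[OF hH hK _ _ G0 M10 Mb0 bb]) (use y1 y2 y3 in \<open>simp_all add: Y_def add.assoc\<close>)
    have e: "Y + 2 = y+1+2" "Y + 1 = y+1+1" "y+1+2 = of_nat (2*Suc n) + b + 2"
      "D = of_nat (2*Suc n+1) gchoose Suc n" "F = 4^(Suc n)" "K = (of_nat (2*Suc n) + b + 2) gchoose (Suc n+1)"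
      by (simp_all add: Y_def y_def D_def x_def F_def K_def algebra_simps)
    show ?thesis using main unfolding G_def Hh_def Mb_def M1_def e by simp
  qed
  also have "(y+1+2)/(y+1+1) * ((y+2)/(y+1) * (\<Sum>j=0..n. A 1 x j / (y gchoose j)))
     = (\<Sum>k=0..n. (of_nat (2*Suc n) + b + 2) / (of_nat k + b + 1)
                 * (((of_nat (2*k+1) gchoose k) + 4^k * b / of_nat (k+1)) / ((of_nat (2*k) + b + 2) gchoose (k+1))))"
  proof -
    have "(y+1+2)/(y+1+1) * ((y+2)/(y+1) * (\<Sum>j=0..n. A 1 x j / (y gchoose j)))
       = (y+1+2)/(y+1+1) * ((y+1+1)/(y+1) * (\<Sum>j=0..n. A 1 x j / (y gchoose j)))"
      by (simp add: add.assoc)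
    also have "\<dots> = (y+1+2)/(y+1) * (\<Sum>j=0..n. A 1 x j / (y gchoose j))"
      using y2 by simp
    also have "\<dots> = (\<Sum>k=0..n. (y+1+2) / (of_nat k + b + 1)
                 * (((of_nat (2*k+1) gchoose k) + 4^k * b / of_nat (k+1)) / ((of_nat (2*k) + b + 2) gchoose (k+1))))"
      unfolding IH sum_distrib_left canc[OF y1] ..
    also have "\<dots> = (\<Sum>k=0..n. (of_nat (2*Suc n) + b + 2) / (of_nat k + b + 1)
                 * (((of_nat (2*k+1) gchoose k) + 4^k * b / of_nat (k+1)) / ((of_nat (2*k) + b + 2) gchoose (k+1))))"
    proof -
      have "y+1+2 = of_nat (2*Suc n) + b + 2" by (simp add: y_def algebra_simps)
      then show ?thesis by (simp only:)
    qed
    finally show ?thesis .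
  qed
  finally show ?case by simp
qed

lemma conv: "(\<Sum>i=0..j. (X gchoose i) / Yj * c^(j-i)) = A c X j / Yj"
  by (simp add: A_def sum_divide_distrib algebra_simps)

lemma conv1: "(\<Sum>i=0..j. (X gchoose i) / Yj) = A 1 X j / Yj"
  using conv[of X Yj 1 j] by simp

lemma conv4: "(\<Sum>i=0..j. (X gchoose i) / Yj * c^(j-i+1)) = c * A c X j / Yj"
proof -
  have "(\<Sum>i=0..j. (X gchoose i) / Yj * c^(j-i+1)) = c * (\<Sum>i=0..j. (X gchoose i) / Yj * c^(j-i))"
    by (simp add: sum_distrib_left algebra_simps)
  also have "\<dots> = c * (A c X j / Yj)" by (simp only: conv)
  finally show ?thesis by simp
qed

theorem corollary1:
  fixes n :: nat and a b c :: complex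
  assumes "b \<notin> neg_ints"
  shows "((\<Sum>j=0..n. \<Sum>i=0..j. ((of_nat (2*n) + a + 2) gchoose i) / (of_nat (2*n+1) gchoose j))
           = (\<Sum>k=0..n. of_nat (n+1) / of_nat (2*k+1) * (((of_nat (2*k) + a) gchoose k) / (of_nat (2*k) gchoose k))))
    \<and> ((\<Sum>j=0..n. \<Sum>i=0..j. (of_nat (2*n+3) gchoose i) / ((of_nat (2*n) + b + 1) gchoose j))
           = (\<Sum>k=0..n. (of_nat (2*n) + b + 2) / (of_nat k + b + 1)
                 * (((of_nat (2*k+1) gchoose k) + 4^k * b / of_nat (k+1)) / ((of_nat (2*k) + b + 2) gchoose (k+1)))))
    \<and> ((\<Sum>j=0..n. \<Sum>i=0..j. (of_nat (n+1) gchoose i) / ((of_nat n + b) gchoose j) * c^(j-i))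
           = (\<Sum>k=0..n. (of_nat n + b + 1) / (b + 1) * ((c + 1)^k / ((of_nat k + b + 1) gchoose k))))
    \<and> ((\<Sum>j=0..n. \<Sum>i=0..j. (of_nat (n+2) gchoose i) / (of_nat n gchoose j) * c^(j-i+1))
           = (\<Sum>k=0..n. of_nat (n+1) / of_nat (k+1) * ((c + 1)^(k+1) - 1)))"
proof (intro conjI)
  show "(\<Sum>j=0..n. \<Sum>i=0..j. ((of_nat (2*n) + a + 2) gchoose i) / (of_nat (2*n+1) gchoose j))
           = (\<Sum>k=0..n. of_nat (n+1) / of_nat (2*k+1) * (((of_nat (2*k) + a) gchoose k) / (of_nat (2*k) gchoose k)))"
    unfolding conv1 by (rule id1)
  show "(\<Sum>j=0..n. \<Sum>i=0..j. (of_nat (2*n+3) gchoose i) / ((of_nat (2*n) + b + 1) gchoose j))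
           = (\<Sum>k=0..n. (of_nat (2*n) + b + 2) / (of_nat k + b + 1)
                 * (((of_nat (2*k+1) gchoose k) + 4^k * b / of_nat (k+1)) / ((of_nat (2*k) + b + 2) gchoose (k+1))))"
    unfolding conv1 by (rule id2[OF assms])
  show "(\<Sum>j=0..n. \<Sum>i=0..j. (of_nat (n+1) gchoose i) / ((of_nat n + b) gchoose j) * c^(j-i))
           = (\<Sum>k=0..n. (of_nat n + b + 1) / (b + 1) * ((c + 1)^k / ((of_nat k + b + 1) gchoose k)))"
    unfolding conv by (rule id3[OF assms])
  show "(\<Sum>j=0..n. \<Sum>i=0..j. (of_nat (n+2) gchoose i) / (of_nat n gchoose j) * c^(j-i+1))
           = (\<Sum>k=0..n. of_nat (n+1) / of_nat (k+1) * ((c + 1)^(k+1) - 1))"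
    unfolding conv4 by (rule id4)
qed

end
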